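(* Let $K,T\subseteq\mathbb R^d$ be unconditional convex sets. Then \[ \gamma_d(K+T)\,\gamma_d(K\cap T)\;\ge\;\gamma_d(K)\,\gamma_d(T). \]
   Context: $\gamma_d$ denotes the standard Gaussian probability measure on $\mathbb R^d$, with density proportional to $e^{-\|x\|^2/2}$. $K+T=\{x+y: x\in K,\ y\in T\}$ is the Minkowski sum. A set is unconditional if it is symmetric with respect to every coordinate hyperplane, i.e. invariant under $(x_1,\dots,x_d)\mapsto(\pm x_1,\dots,\pm x_d)$ for every choice of signs. *)

theory Defs
  imports "HOL-Analysis.Analysis"
begin

definition gauss_density :: "real ^ 'n \<Rightarrow> real" where
  "gauss_density x = exp (- (norm x)\<^sup>2 / 2) / (sqrt (2 * pi)) ^ CARD('n)"

text \<open>Standard Gaussian probability measure gamma_d, as a measure on the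
  Lebesgue sigma-algebra (convex sets are Lebesgue measurable but need not be Borel).\<close>
definition gaussian :: "(real ^ 'n) measure" where
  "gaussian = density lebesgue (\<lambda>x. ennreal (gauss_density x))"

definition gamma :: "(real ^ 'n) set \<Rightarrow> real" where
  "gamma A = measure gaussian A"

definition unconditional :: "(real ^ 'n) set \<Rightarrow> bool" where
  "unconditional K \<longleftrightarrow>
     (\<forall>x\<in>K. \<forall>s :: 'n \<Rightarrow> real. (\<forall>i. s i = 1 \<or> s i = -1) \<longrightarrow> (\<chi> i. s i * x $ i) \<in> K)"

definition minkowski_sum :: "(real ^ 'n) set \<Rightarrow> (real ^ 'n) set \<Rightarrow> (real ^ 'n) set" where
  "minkowski_sum K T = {x + y | x y. x \<in> K \<and> y \<in> T}"

end

theory Submission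
  imports Defs "HOL-Probability.Distributions"
begin


definition jn :: "real \<Rightarrow> real \<Rightarrow> real" where "jn s t = (if \<bar>t\<bar> \<le> \<bar>s\<bar> then s else t)"
definition mt :: "real \<Rightarrow> real \<Rightarrow> real" where "mt s t = (if \<bar>t\<bar> \<le> \<bar>s\<bar> then t else s)"

lemma ennreal_four:
  fixes P Q u v :: ennreal
  assumes "P \<le> u" "Q \<le> u" "P * Q \<le> u * v"
  shows "P + Q \<le> u + v"
proof (cases "u = \<infinity>")
  case True then show ?thesis by simp
next
  case uf: False
  show ?thesis
  proof (cases "u = 0")
    case True then show ?thesis using assms by simp
  next
    case u0: False
    show ?thesis
    proof (cases "v = \<infinity>")
      case True then show ?thesis using u0 by simp
    next
      case vf: False
      obtain u' where u: "u = ennreal u'" "u' \<ge> 0" using uf by (cases u) auto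
      obtain v' where v: "v = ennreal v'" "v' \<ge> 0" using vf by (cases v) auto
      obtain P' where P: "P = ennreal P'" "P' \<ge> 0" using assms(1) uf
        by (cases P) (auto simp: top_unique)
      obtain Q' where Q: "Q = ennreal Q'" "Q' \<ge> 0" using assms(2) uf
        by (cases Q) (auto simp: top_unique)
      have h1: "P' \<le> u'" using assms(1) u P by simp
      have h2: "Q' \<le> u'" using assms(2) u Q by simp
      have h3: "P' * Q' \<le> u' * v'" using assms(3) u v P Q
        by (simp add: ennreal_mult'[symmetric] mult_nonneg_nonneg)
      have u'0: "u' > 0" using u u0 by auto
      have "(u' - P') * (u' - Q') \<ge> 0" using h1 h2 by simp
      then have "u' * (P' + Q') \<le> u' * (u' + v')" using h3 by (simp add: algebra_simps)
      then have "P' + Q' \<le> u' + v'" using u'0 by simp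
      then show ?thesis using u v P Q by (simp add: ennreal_plus[symmetric] del: ennreal_plus)
    qed
  qed
qed

lemma sym_split:
  fixes F :: "real \<Rightarrow> real \<Rightarrow> ennreal"
  assumes [measurable]: "case_prod F \<in> borel_measurable (lborel \<Otimes>\<^sub>M lborel)"
  shows "(\<integral>\<^sup>+s. \<integral>\<^sup>+t. F s t \<partial>lborel \<partial>lborel) =
    (\<integral>\<^sup>+s. \<integral>\<^sup>+t. (if \<bar>s\<bar> < \<bar>t\<bar> then F s t + F t s else 0) + (if \<bar>s\<bar> = \<bar>t\<bar> then F s t else 0) \<partial>lborel \<partial>lborel)"
proof -
  have m1[measurable]: "(\<lambda>(s,t). F s t) \<in> borel_measurable (lborel \<Otimes>\<^sub>M lborel)" by simp
  have m2[measurable]: "(\<lambda>(s,t). F t s) \<in> borel_measurable (lborel \<Otimes>\<^sub>M lborel)"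
    using measurable_pair_swap[OF assms] by (simp add: split_beta')
  have "(\<integral>\<^sup>+s. \<integral>\<^sup>+t. F s t \<partial>lborel \<partial>lborel) =
    (\<integral>\<^sup>+s. \<integral>\<^sup>+t. ((if \<bar>s\<bar> < \<bar>t\<bar> then F s t else 0) + (if \<bar>s\<bar> = \<bar>t\<bar> then F s t else 0))
       + (if \<bar>t\<bar> < \<bar>s\<bar> then F s t else 0) \<partial>lborel \<partial>lborel)"
    by (intro nn_integral_cong) auto
  also have "\<dots> = (\<integral>\<^sup>+s. (\<integral>\<^sup>+t. ((if \<bar>s\<bar> < \<bar>t\<bar> then F s t else 0) + (if \<bar>s\<bar> = \<bar>t\<bar> then F s t else 0)) \<partial>lborel)
       + (\<integral>\<^sup>+t. (if \<bar>t\<bar> < \<bar>s\<bar> then F s t else 0) \<partial>lborel) \<partial>lborel)"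
    by (intro nn_integral_cong nn_integral_add) auto
  also have "\<dots> = (\<integral>\<^sup>+s. (\<integral>\<^sup>+t. ((if \<bar>s\<bar> < \<bar>t\<bar> then F s t else 0) + (if \<bar>s\<bar> = \<bar>t\<bar> then F s t else 0)) \<partial>lborel) \<partial>lborel)
       + (\<integral>\<^sup>+s. (\<integral>\<^sup>+t. (if \<bar>t\<bar> < \<bar>s\<bar> then F s t else 0) \<partial>lborel) \<partial>lborel)"
    by (intro nn_integral_add) auto
  also have "(\<integral>\<^sup>+s. (\<integral>\<^sup>+t. (if \<bar>t\<bar> < \<bar>s\<bar> then F s t else 0) \<partial>lborel) \<partial>lborel)
     = (\<integral>\<^sup>+t. (\<integral>\<^sup>+s. (if \<bar>t\<bar> < \<bar>s\<bar> then F s t else 0) \<partial>lborel) \<partial>lborel)"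
    by (rule lborel_pair.Fubini'[symmetric]) auto
  also have "(\<integral>\<^sup>+s. (\<integral>\<^sup>+t. ((if \<bar>s\<bar> < \<bar>t\<bar> then F s t else 0) + (if \<bar>s\<bar> = \<bar>t\<bar> then F s t else 0)) \<partial>lborel) \<partial>lborel)
       + (\<integral>\<^sup>+t. (\<integral>\<^sup>+s. (if \<bar>t\<bar> < \<bar>s\<bar> then F s t else 0) \<partial>lborel) \<partial>lborel)
     = (\<integral>\<^sup>+s. (\<integral>\<^sup>+t. ((if \<bar>s\<bar> < \<bar>t\<bar> then F s t else 0) + (if \<bar>s\<bar> = \<bar>t\<bar> then F s t else 0)) \<partial>lborel)
       + (\<integral>\<^sup>+t. (if \<bar>s\<bar> < \<bar>t\<bar> then F t s else 0) \<partial>lborel) \<partial>lborel)"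
    by (intro nn_integral_add[symmetric]) auto
  also have "\<dots> = (\<integral>\<^sup>+s. \<integral>\<^sup>+t. (if \<bar>s\<bar> < \<bar>t\<bar> then F s t + F t s else 0) + (if \<bar>s\<bar> = \<bar>t\<bar> then F s t else 0) \<partial>lborel \<partial>lborel)"
  proof (intro nn_integral_cong)
    fix s
    have "(\<integral>\<^sup>+t. (if \<bar>s\<bar> < \<bar>t\<bar> then F s t + F t s else 0) + (if \<bar>s\<bar> = \<bar>t\<bar> then F s t else 0) \<partial>lborel)
      = (\<integral>\<^sup>+t. ((if \<bar>s\<bar> < \<bar>t\<bar> then F s t else 0) + (if \<bar>s\<bar> = \<bar>t\<bar> then F s t else 0)) + (if \<bar>s\<bar> < \<bar>t\<bar> then F t s else 0) \<partial>lborel)"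
      by (intro nn_integral_cong) (auto simp: add_ac)
    also have "\<dots> = (\<integral>\<^sup>+t. ((if \<bar>s\<bar> < \<bar>t\<bar> then F s t else 0) + (if \<bar>s\<bar> = \<bar>t\<bar> then F s t else 0)) \<partial>lborel) + (\<integral>\<^sup>+t. (if \<bar>s\<bar> < \<bar>t\<bar> then F t s else 0) \<partial>lborel)"
      by (intro nn_integral_add) auto
    finally show "(\<integral>\<^sup>+t. ((if \<bar>s\<bar> < \<bar>t\<bar> then F s t else 0) + (if \<bar>s\<bar> = \<bar>t\<bar> then F s t else 0)) \<partial>lborel) + (\<integral>\<^sup>+t. (if \<bar>s\<bar> < \<bar>t\<bar> then F t s else 0) \<partial>lborel) = (\<integral>\<^sup>+t. (if \<bar>s\<bar> < \<bar>t\<bar> then F s t + F t s else 0) + (if \<bar>s\<bar> = \<bar>t\<bar> then F s t else 0) \<partial>lborel)" by simp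
  qed
  finally show ?thesis .
qed

lemma ad_1d:
  fixes g1 g2 g3 g4 :: "real \<Rightarrow> ennreal"
  assumes [measurable]: "g1 \<in> borel_measurable borel" "g2 \<in> borel_measurable borel"
    "g3 \<in> borel_measurable borel" "g4 \<in> borel_measurable borel"
  assumes hyp: "\<And>s t. g1 s * g2 t \<le> g3 (jn s t) * g4 (mt s t)"
  shows "integral\<^sup>N lborel g1 * integral\<^sup>N lborel g2 \<le> integral\<^sup>N lborel g3 * integral\<^sup>N lborel g4"
proof -
  have e: "integral\<^sup>N lborel f * integral\<^sup>N lborel g = (\<integral>\<^sup>+s. \<integral>\<^sup>+t. f s * g t \<partial>lborel \<partial>lborel)"
    if [measurable]: "f \<in> borel_measurable borel" "g \<in> borel_measurable borel" for f g :: "real \<Rightarrow> ennreal"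
  proof -
    have "(\<integral>\<^sup>+s. \<integral>\<^sup>+t. f s * g t \<partial>lborel \<partial>lborel) = (\<integral>\<^sup>+s. f s * integral\<^sup>N lborel g \<partial>lborel)"
      by (intro nn_integral_cong nn_integral_cmult) auto
    also have "\<dots> = integral\<^sup>N lborel f * integral\<^sup>N lborel g"
      by (subst nn_integral_multc) auto
    finally show ?thesis by simp
  qed
  have "integral\<^sup>N lborel g1 * integral\<^sup>N lborel g2 = (\<integral>\<^sup>+s. \<integral>\<^sup>+t. g1 s * g2 t \<partial>lborel \<partial>lborel)"
    by (rule e) auto
  also have "\<dots> = (\<integral>\<^sup>+s. \<integral>\<^sup>+t. (if \<bar>s\<bar> < \<bar>t\<bar> then g1 s * g2 t + g1 t * g2 s else 0) + (if \<bar>s\<bar> = \<bar>t\<bar> then g1 s * g2 t else 0) \<partial>lborel \<partial>lborel)"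
    by (rule sym_split[where F="\<lambda>s t. g1 s * g2 t"]) auto
  also have "\<dots> \<le> (\<integral>\<^sup>+s. \<integral>\<^sup>+t. (if \<bar>s\<bar> < \<bar>t\<bar> then g3 s * g4 t + g3 t * g4 s else 0) + (if \<bar>s\<bar> = \<bar>t\<bar> then g3 s * g4 t else 0) \<partial>lborel \<partial>lborel)"
  proof (intro nn_integral_mono add_mono)
    fix s t :: real
    show "(if \<bar>s\<bar> = \<bar>t\<bar> then g1 s * g2 t else 0) \<le> (if \<bar>s\<bar> = \<bar>t\<bar> then g3 s * g4 t else 0)"
      using hyp[of s t] by (auto simp: jn_def mt_def)
    show "(if \<bar>s\<bar> < \<bar>t\<bar> then g1 s * g2 t + g1 t * g2 s else 0) \<le> (if \<bar>s\<bar> < \<bar>t\<bar> then g3 s * g4 t + g3 t * g4 s else 0)"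
    proof (cases "\<bar>s\<bar> < \<bar>t\<bar>")
      case True
      have a: "g1 s * g2 t \<le> g3 t * g4 s" using hyp[of s t] True by (auto simp: jn_def mt_def)
      have b: "g1 t * g2 s \<le> g3 t * g4 s" using hyp[of t s] True by (auto simp: jn_def mt_def)
      have c: "g1 s * g2 s \<le> g3 s * g4 s" using hyp[of s s] by (auto simp: jn_def mt_def)
      have d: "g1 t * g2 t \<le> g3 t * g4 t" using hyp[of t t] by (auto simp: jn_def mt_def)
      have "(g1 s * g2 t) * (g1 t * g2 s) = (g1 t * g2 t) * (g1 s * g2 s)" by (simp add: ac_simps)
      also have "\<dots> \<le> (g3 t * g4 t) * (g3 s * g4 s)" by (intro mult_mono d c) auto
      also have "\<dots> = (g3 t * g4 s) * (g3 s * g4 t)" by (simp add: ac_simps)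
      finally have "g1 s * g2 t + g1 t * g2 s \<le> g3 t * g4 s + g3 s * g4 t"
        by (rule ennreal_four[OF a b])
      then show ?thesis using True by (simp add: add_ac)
    qed simp
  qed
  also have "\<dots> = (\<integral>\<^sup>+s. \<integral>\<^sup>+t. g3 s * g4 t \<partial>lborel \<partial>lborel)"
    by (rule sym_split[where F="\<lambda>s t. g3 s * g4 t", symmetric]) auto
  also have "\<dots> = integral\<^sup>N lborel g3 * integral\<^sup>N lborel g4"
    by (rule e[symmetric]) auto
  finally show ?thesis .
qed

lemma ad_multi:
  fixes I :: "'i set"
  assumes "finite I"
  shows "\<And>f1 f2 f3 f4. f1 \<in> borel_measurable (PiM I (\<lambda>_. lborel)) \<Longrightarrow>
     f2 \<in> borel_measurable (PiM I (\<lambda>_. lborel)) \<Longrightarrow>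
     f3 \<in> borel_measurable (PiM I (\<lambda>_. lborel)) \<Longrightarrow>
     f4 \<in> borel_measurable (PiM I (\<lambda>_. lborel)) \<Longrightarrow>
     (\<And>x y. x \<in> space (PiM I (\<lambda>_. lborel)) \<Longrightarrow> y \<in> space (PiM I (\<lambda>_. lborel)) \<Longrightarrow>
        f1 x * f2 y \<le> f3 (\<lambda>k. jn (x k) (y k)) * f4 (\<lambda>k. mt (x k) (y k))) \<Longrightarrow>
     integral\<^sup>N (PiM I (\<lambda>_. lborel)) f1 * integral\<^sup>N (PiM I (\<lambda>_. lborel)) f2
       \<le> integral\<^sup>N (PiM I (\<lambda>_. lborel)) f3 * integral\<^sup>N (PiM I (\<lambda>_. lborel)) f4"
  using assms
proof (induction I rule: finite_induct)
  case empty
  interpret product_sigma_finite "\<lambda>_::'i. lborel :: real measure" by standard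
  have u: "(\<lambda>k::'i. jn undefined undefined) = (\<lambda>_. undefined)" "(\<lambda>k::'i. mt undefined undefined) = (\<lambda>_. undefined)"
    by (auto simp: jn_def mt_def)
  show ?case
    using empty.prems(5)[of "\<lambda>_. undefined" "\<lambda>_. undefined"]
    by (simp add: nn_integral_empty u space_PiM)
next
  case (insert i I f1 f2 f3 f4)
  interpret product_sigma_finite "\<lambda>_::'i. lborel :: real measure" by standard
  note [measurable] = insert.prems(1-4)
  let ?P = "PiM I (\<lambda>_::'i. lborel :: real measure)"
  define g where "g f y = (\<integral>\<^sup>+x. f (x(i := y)) \<partial>?P)" for f :: "('i \<Rightarrow> real) \<Rightarrow> ennreal" and y
  have gm: "g f \<in> borel_measurable borel" if [measurable]: "f \<in> borel_measurable (PiM (insert i I) (\<lambda>_. lborel))" for f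
  proof -
    interpret pair_sigma_finite lborel ?P
      by (intro pair_sigma_finite.intro lborel.sigma_finite_measure_axioms sigma_finite) (auto simp: insert.hyps)
    have "(\<lambda>(y, x). f (x(i := y))) \<in> borel_measurable (lborel \<Otimes>\<^sub>M ?P)" by measurable
    from M2.borel_measurable_nn_integral[OF this] have "(\<lambda>y. \<integral>\<^sup>+x. f (x(i := y)) \<partial>?P) \<in> borel_measurable borel" by simp
    moreover have "g f = (\<lambda>y. \<integral>\<^sup>+x. f (x(i := y)) \<partial>?P)" by (simp add: fun_eq_iff g_def)
    ultimately show ?thesis by simp
  qed
  have rev: "integral\<^sup>N (PiM (insert i I) (\<lambda>_. lborel)) f = integral\<^sup>N lborel (g f)"
    if "f \<in> borel_measurable (PiM (insert i I) (\<lambda>_. lborel))" for f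
    unfolding g_def by (rule product_nn_integral_insert_rev) (use insert.hyps that in auto)
  have upd: "x(i := s) \<in> space (PiM (insert i I) (\<lambda>_::'i. lborel :: real measure))"
    if "x \<in> space ?P" for x s
    using that by (auto simp: space_PiM PiE_def extensional_def)
  have hyp: "g f1 s * g f2 t \<le> g f3 (jn s t) * g f4 (mt s t)" for s t
    unfolding g_def
  proof (rule insert.IH)
    show "(\<lambda>x. f1 (x(i := s))) \<in> borel_measurable ?P" by measurable
    show "(\<lambda>x. f2 (x(i := t))) \<in> borel_measurable ?P" by measurable
    show "(\<lambda>x. f3 (x(i := jn s t))) \<in> borel_measurable ?P" by measurable
    show "(\<lambda>x. f4 (x(i := mt s t))) \<in> borel_measurable ?P" by measurable
    fix x y assume x: "x \<in> space ?P" and y: "y \<in> space ?P"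
    have e1: "(\<lambda>k. jn ((x(i := s)) k) ((y(i := t)) k)) = (\<lambda>k. jn (x k) (y k))(i := jn s t)"
      by auto
    have e2: "(\<lambda>k. mt ((x(i := s)) k) ((y(i := t)) k)) = (\<lambda>k. mt (x k) (y k))(i := mt s t)"
      by auto
    show "f1 (x(i := s)) * f2 (y(i := t)) \<le> f3 ((\<lambda>k. jn (x k) (y k))(i := jn s t)) * f4 ((\<lambda>k. mt (x k) (y k))(i := mt s t))"
      using insert.prems(5)[OF upd[OF x, of s] upd[OF y, of t]] by (simp only: e1 e2)
  qed
  have "integral\<^sup>N lborel (g f1) * integral\<^sup>N lborel (g f2) \<le> integral\<^sup>N lborel (g f3) * integral\<^sup>N lborel (g f4)"
    by (rule ad_1d) (use gm hyp in auto)
  then show ?case by (simp add: rev)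
qed



lemma uncond_flip:
  assumes "unconditional K" "x \<in> K" "\<And>i. s i = 1 \<or> s i = -1"
  shows "(\<chi> i. s i * x $ i) \<in> K"
  using assms unfolding unconditional_def by blast

lemma down_closed:
  fixes K :: "(real ^ 'n) set"
  assumes cK: "convex K" and uK: "unconditional K" and xK: "x \<in> K"
    and le: "\<And>i. \<bar>w $ i\<bar> \<le> \<bar>x $ i\<bar>"
  shows "w \<in> K"
proof -
  have "finite S \<Longrightarrow> (\<chi> i. if i \<in> S then w $ i else x $ i) \<in> K" for S :: "'n set"
  proof (induction S rule: finite_induct)
    case empty
    have "(\<chi> i. if i \<in> {} then w $ i else x $ i) = x" by (simp add: vec_eq_iff)
    then show ?case using xK by simp
  next
    case (insert j S)
    define z where "z = (\<chi> i. if i \<in> S then w $ i else x $ i)"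
    have zK: "z \<in> K" using insert.IH by (simp add: z_def)
    define z' where "z' = (\<chi> i. (if i = j then -1 else 1) * z $ i)"
    have z'K: "z' \<in> K" unfolding z'_def by (rule uncond_flip[OF uK zK]) auto
    have zj: "z $ j = x $ j" using insert.hyps by (simp add: z_def)
    show ?case
    proof (cases "x $ j = 0")
      case True
      then have "w $ j = 0" using le[of j] by simp
      then have "(\<chi> i. if i \<in> insert j S then w $ i else x $ i) = z"
        using True by (auto simp: vec_eq_iff z_def)
      then show ?thesis using zK by simp
    next
      case False
      define t where "t = (1 + w $ j / x $ j) / 2"
      obtain q where q: "q = w $ j / x $ j" by simp
      have r: "\<bar>q\<bar> \<le> 1" using le[of j] False q by (simp add: abs_divide divide_le_eq_1)
      have q12: "-1 \<le> q" "q \<le> 1" using r by (simp_all add: abs_le_iff)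
      have t0: "0 \<le> t" "0 \<le> 1 - t" using q12 unfolding t_def q[symmetric] by auto
      have "t *\<^sub>R z + (1 - t) *\<^sub>R z' \<in> K" by (rule convexD[OF cK zK z'K t0]) simp
      moreover have "t *\<^sub>R z + (1 - t) *\<^sub>R z' = (\<chi> i. if i \<in> insert j S then w $ i else x $ i)"
      proof (subst vec_eq_iff, intro allI)
        fix i
        show "(t *\<^sub>R z + (1 - t) *\<^sub>R z') $ i = (\<chi> i. if i \<in> insert j S then w $ i else x $ i) $ i"
        proof (cases "i = j")
          case True
          have "t * x $ j - (1 - t) * x $ j = (w $ j / x $ j) * x $ j" by (simp add: t_def field_simps)
          also have "\<dots> = w $ j" using False by simp
          finally show ?thesis using True zj by (simp add: z'_def)
        next
          case False
          then show ?thesis by (simp add: z'_def z_def algebra_simps)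
        qed
      qed
      ultimately show ?thesis by simp
    qed
  qed
  from this[of UNIV] have "(\<chi> i. if i \<in> UNIV then w $ i else x $ i) \<in> K" by simp
  moreover have "(\<chi> i. if i \<in> UNIV then w $ i else x $ i) = w" by (simp add: vec_eq_iff)
  ultimately show ?thesis by simp
qed

lemma join_in:
  fixes K T :: "(real ^ 'n) set"
  assumes "convex K" "convex T" "unconditional K" "unconditional T" "x \<in> K" "y \<in> T"
  shows "(\<chi> i. jn (x $ i) (y $ i)) \<in> minkowski_sum K T"
proof -
  define u where "u = (\<chi> i. if \<bar>y $ i\<bar> \<le> \<bar>x $ i\<bar> then x $ i else 0)"
  define v where "v = (\<chi> i. if \<bar>y $ i\<bar> \<le> \<bar>x $ i\<bar> then 0 else y $ i)"
  have "u \<in> K" by (rule down_closed[OF assms(1,3,5)]) (auto simp: u_def)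
  moreover have "v \<in> T" by (rule down_closed[OF assms(2,4,6)]) (auto simp: v_def)
  moreover have "(\<chi> i. jn (x $ i) (y $ i)) = u + v" by (auto simp: vec_eq_iff u_def v_def jn_def)
  ultimately show ?thesis unfolding minkowski_sum_def by blast
qed

lemma meet_in:
  fixes K T :: "(real ^ 'n) set"
  assumes "convex K" "convex T" "unconditional K" "unconditional T" "x \<in> K" "y \<in> T"
  shows "(\<chi> i. mt (x $ i) (y $ i)) \<in> K \<inter> T"
proof
  show "(\<chi> i. mt (x $ i) (y $ i)) \<in> K" by (rule down_closed[OF assms(1,3,5)]) (auto simp: mt_def)
  show "(\<chi> i. mt (x $ i) (y $ i)) \<in> T" by (rule down_closed[OF assms(2,4,6)]) (auto simp: mt_def)
qed



definition phi1 :: "real \<Rightarrow> real" where "phi1 t = exp (- t\<^sup>2 / 2) / sqrt (2 * pi)"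

definition Phi :: "(real ^ 'n \<Rightarrow> real) \<Rightarrow> real ^ 'n" where
  "Phi \<omega> = (\<Sum>b\<in>Basis. \<omega> b *\<^sub>R b)"

lemma Phi_inner: "b \<in> Basis \<Longrightarrow> Phi \<omega> \<bullet> b = \<omega> b"
  by (simp add: Phi_def inner_sum_left inner_Basis if_distrib sum.delta cong: if_cong)

lemma Phi_nth: "Phi \<omega> $ i = \<omega> (axis i 1)"
  by (simp add: cart_eq_inner_axis Phi_inner axis_in_Basis_iff)

lemma Phi_norm2: "(norm (Phi \<omega>))\<^sup>2 = (\<Sum>b\<in>Basis. (\<omega> b)\<^sup>2)"
proof -
  have "(norm (Phi \<omega>))\<^sup>2 = Phi \<omega> \<bullet> Phi \<omega>" by (rule power2_norm_eq_inner)
  also have "\<dots> = (\<Sum>b\<in>Basis. (Phi \<omega> \<bullet> b) * (Phi \<omega> \<bullet> b))" by (rule euclidean_inner)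
  also have "\<dots> = (\<Sum>b\<in>Basis. (\<omega> b)\<^sup>2)" by (intro sum.cong) (simp_all add: Phi_inner power2_eq_square)
  finally show ?thesis .
qed

lemma Phi_eq: "Phi = (\<lambda>f. \<Sum>b\<in>Basis. f b *\<^sub>R b)"
  by (simp add: fun_eq_iff Phi_def)

lemma card_Basis_cart: "card (Basis :: (real ^ 'n) set) = CARD('n)"
  using DIM_cart[where 'a=real and 'b='n] by simp

lemma gd_Phi: "gauss_density (Phi \<omega>) = (\<Prod>b\<in>Basis. phi1 (\<omega> b))"
proof -
  have "exp (- (norm (Phi \<omega>))\<^sup>2 / 2) = (\<Prod>b\<in>Basis. exp (- (\<omega> b)\<^sup>2 / 2))"
    by (simp add: Phi_norm2 exp_sum[symmetric] sum_negf sum_divide_distrib)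
  moreover have "(sqrt (2 * pi)) ^ CARD('n) = (\<Prod>b\<in>(Basis :: (real ^ 'n) set). sqrt (2 * pi))"
    by (simp add: card_Basis_cart)
  ultimately show ?thesis
    by (simp add: gauss_density_def phi1_def prod_dividef)
qed

lemma Phi_measurable[measurable]: "Phi \<in> borel_measurable (PiM Basis (\<lambda>_. lborel))"
  unfolding Phi_def by measurable

lemma gd_measurable[measurable]: "gauss_density \<in> borel_measurable borel"
  unfolding gauss_density_def by measurable

lemma gauss_emeasure:
  fixes A :: "(real ^ 'n) set"
  assumes [measurable]: "A \<in> sets borel"
  shows "emeasure gaussian A = (\<integral>\<^sup>+\<omega>. indicator A (Phi \<omega>) * (\<Prod>b\<in>Basis. ennreal (phi1 (\<omega> b))) \<partial>PiM Basis (\<lambda>_. lborel))"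
proof -
  have "emeasure gaussian A = (\<integral>\<^sup>+x. ennreal (gauss_density x) * indicator A x \<partial>lebesgue)"
    unfolding gaussian_def
    by (rule emeasure_density) (auto intro: measurable_completion sets_completionI_sets)
  also have "\<dots> = (\<integral>\<^sup>+x. ennreal (gauss_density x) * indicator A x \<partial>lborel)"
    by (rule nn_integral_completion)
  also have "\<dots> = (\<integral>\<^sup>+x. ennreal (gauss_density x) * indicator A x \<partial>distr (PiM Basis (\<lambda>_. lborel)) borel Phi)"
    by (subst lborel_eq[where 'a="real ^ 'n"]) (simp add: Phi_eq)
  also have "\<dots> = (\<integral>\<^sup>+\<omega>. ennreal (gauss_density (Phi \<omega>)) * indicator A (Phi \<omega>) \<partial>PiM Basis (\<lambda>_. lborel))"
    by (rule nn_integral_distr) auto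
  also have "\<dots> = (\<integral>\<^sup>+\<omega>. indicator A (Phi \<omega>) * (\<Prod>b\<in>Basis. ennreal (phi1 (\<omega> b))) \<partial>PiM Basis (\<lambda>_. lborel))"
    by (intro nn_integral_cong) (simp add: gd_Phi prod_ennreal phi1_def mult.commute)
  finally show ?thesis .
qed



lemma phi1_int: "(\<integral>\<^sup>+t. ennreal (phi1 t) \<partial>lborel) = 1"
proof -
  interpret prob_space "density lborel (\<lambda>x. ennreal (normal_density 0 1 x))"
    by (rule prob_space_normal_density) simp
  have "phi1 = normal_density 0 1" by (simp add: fun_eq_iff phi1_def std_normal_density_def)
  moreover have "emeasure (density lborel (\<lambda>x. ennreal (normal_density 0 1 x))) UNIV = 1"
    using emeasure_space_1 by simp
  ultimately have "emeasure (density lborel (\<lambda>x. ennreal (phi1 x))) UNIV = 1" by simp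
  then show ?thesis by (subst (asm) emeasure_density) (auto simp: phi1_def)
qed

lemma space_gaussian: "space gaussian = UNIV"
  by (simp add: gaussian_def)

lemma gauss_finite: "emeasure gaussian (A :: (real ^ 'n) set) < \<infinity>"
proof -
  interpret product_sigma_finite "\<lambda>_::real ^ 'n. lborel :: real measure" by standard
  have "emeasure gaussian A \<le> emeasure gaussian (UNIV :: (real ^ 'n) set)"
    using emeasure_space[of gaussian A] by (simp add: space_gaussian)
  also have "\<dots> = (\<integral>\<^sup>+\<omega>. (\<Prod>b\<in>Basis. ennreal (phi1 (\<omega> b))) \<partial>PiM (Basis :: (real ^ 'n) set) (\<lambda>_. lborel))"
    by (subst gauss_emeasure) auto
  also have "\<dots> = (\<Prod>b\<in>(Basis :: (real ^ 'n) set). \<integral>\<^sup>+t. ennreal (phi1 t) \<partial>lborel)"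
    by (rule product_nn_integral_prod) (auto simp: phi1_def)
  also have "\<dots> = 1" by (simp add: phi1_int)
  finally show ?thesis by (auto simp: top_unique less_top[symmetric])
qed

lemma convex_gauss:
  fixes S :: "(real ^ 'n) set"
  assumes "convex S"
  shows "S \<in> sets lebesgue" "emeasure gaussian (closure S) \<le> emeasure gaussian (interior S)"
proof -
  have F: "frontier S \<in> null_sets lebesgue"
    using negligible_convex_frontier[OF assms] negligible_iff_null_sets by blast
  have "S - interior S \<in> null_sets lebesgue"
    by (rule null_sets_completion_subset[OF _ F]) (auto simp: frontier_def intro: closure_subset[THEN subsetD])
  moreover have "interior S \<in> sets lebesgue" by (intro sets_completionI_sets) auto
  moreover have "S = interior S \<union> (S - interior S)" using interior_subset by blast
  ultimately show "S \<in> sets lebesgue" by (metis null_setsD2 sets.Un)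
  have gm: "(\<lambda>x. ennreal (gauss_density x)) \<in> borel_measurable lebesgue"
    by (intro measurable_completion) simp
  have Fg: "emeasure gaussian (frontier S) = 0"
    unfolding gaussian_def using F by (simp add: emeasure_density[OF gm] nn_integral_null_set null_setsD2)
  have "closure S = interior S \<union> frontier S" by (auto simp: frontier_def intro: interior_subset[THEN subsetD, of _ S] closure_subset[THEN subsetD])
  then have "emeasure gaussian (closure S) \<le> emeasure gaussian (interior S) + emeasure gaussian (frontier S)"
    by (metis emeasure_subadditive F \<open>interior S \<in> sets lebesgue\<close> gaussian_def null_setsD2 sets_density)
  then show "emeasure gaussian (closure S) \<le> emeasure gaussian (interior S)" using Fg by simp
qed



definition fA :: "(real ^ 'n) set \<Rightarrow> (real ^ 'n \<Rightarrow> real) \<Rightarrow> ennreal" where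
  "fA A \<omega> = indicator A (Phi \<omega>) * (\<Prod>b\<in>Basis. ennreal (phi1 (\<omega> b)))"

lemma phi1_measurable[measurable]: "phi1 \<in> borel_measurable borel"
  unfolding phi1_def by measurable

lemma fA_measurable:
  assumes A: "A \<in> sets borel"
  shows "fA A \<in> borel_measurable (PiM Basis (\<lambda>_. lborel))"
proof -
  have 1: "(\<lambda>\<omega>. indicator A (Phi \<omega>) :: ennreal) \<in> borel_measurable (PiM Basis (\<lambda>_. lborel))"
    using measurable_compose[OF Phi_measurable borel_measurable_indicator[OF A]] by (simp add: comp_def)
  have 2: "(\<lambda>\<omega>. \<Prod>b\<in>Basis. ennreal (phi1 (\<omega> b))) \<in> borel_measurable (PiM (Basis :: (real ^ 'n) set) (\<lambda>_. lborel))"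
  proof (intro borel_measurable_prod_ennreal)
    fix b :: "real ^ 'n" assume "b \<in> Basis"
    then have "(\<lambda>\<omega>. \<omega> b) \<in> measurable (PiM (Basis :: (real ^ 'n) set) (\<lambda>_. lborel)) lborel"
      by (rule measurable_component_singleton)
    then have "(\<lambda>\<omega>. \<omega> b) \<in> borel_measurable (PiM (Basis :: (real ^ 'n) set) (\<lambda>_. lborel))" by simp
    then show "(\<lambda>\<omega>. ennreal (phi1 (\<omega> b))) \<in> borel_measurable (PiM (Basis :: (real ^ 'n) set) (\<lambda>_. lborel))"
      by measurable
  qed
  show ?thesis unfolding fA_def[abs_def] using 1 2 by measurable
qed

lemma prod_jm: "(\<Prod>b\<in>Basis. ennreal (phi1 (x b))) * (\<Prod>b\<in>Basis. ennreal (phi1 (y b)))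
  = (\<Prod>b\<in>(Basis :: (real ^ 'n) set). ennreal (phi1 (jn (x b) (y b)))) * (\<Prod>b\<in>Basis. ennreal (phi1 (mt (x b) (y b))))"
  unfolding prod.distrib[symmetric] by (intro prod.cong refl) (auto simp: jn_def mt_def mult.commute)

lemma Phi_jn: "Phi (\<lambda>k. jn (x k) (y k)) = (\<chi> i. jn (Phi x $ i) (Phi y $ i))"
  by (simp add: vec_eq_iff Phi_nth)

lemma Phi_mt: "Phi (\<lambda>k. mt (x k) (y k)) = (\<chi> i. mt (Phi x $ i) (Phi y $ i))"
  by (simp add: vec_eq_iff Phi_nth)

theorem theorem1p5:
  fixes K T :: "(real ^ 'n) set"
  assumes "convex K" and "convex T"
    and "unconditional K" and "unconditional T"
  shows "gamma (minkowski_sum K T) * gamma (K \<inter> T) \<ge> gamma K * gamma T"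
proof -
  let ?L = "PiM (Basis :: (real ^ 'n) set) (\<lambda>_. lborel :: real measure)"
  let ?S = "minkowski_sum K T"
  have eqS: "{x + y |x y. x \<in> K \<and> y \<in> T} = (\<Union>x\<in>K. \<Union>y\<in>T. {x + y})" by auto
  have cS: "convex ?S" using convex_sums[OF assms(1,2)] unfolding minkowski_sum_def
    by (simp add: eqS)
  have cI: "convex (K \<inter> T)" using assms(1,2) by (rule convex_Int)
  have main: "fA (interior K) x * fA (interior T) y \<le> fA (closure ?S) (\<lambda>k. jn (x k) (y k)) * fA (closure (K \<inter> T)) (\<lambda>k. mt (x k) (y k))" for x y
  proof (cases "Phi x \<in> interior K \<and> Phi y \<in> interior T")
    case True
    then have xK: "Phi x \<in> K" and yT: "Phi y \<in> T" using interior_subset by blast+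
    have "Phi (\<lambda>k. jn (x k) (y k)) \<in> closure ?S"
      unfolding Phi_jn using join_in[OF assms xK yT] closure_subset by blast
    moreover have "Phi (\<lambda>k. mt (x k) (y k)) \<in> closure (K \<inter> T)"
      unfolding Phi_mt using meet_in[OF assms xK yT] closure_subset by blast
    ultimately show ?thesis using True prod_jm[of x y] by (simp add: fA_def)
  next
    case False
    then show ?thesis by (auto simp: fA_def)
  qed
  have ad: "integral\<^sup>N ?L (fA (interior K)) * integral\<^sup>N ?L (fA (interior T))
     \<le> integral\<^sup>N ?L (fA (closure ?S)) * integral\<^sup>N ?L (fA (closure (K \<inter> T)))"
    by (rule ad_multi) (auto intro!: fA_measurable main)
  have ge: "integral\<^sup>N ?L (fA A) = emeasure gaussian A" if "A \<in> sets borel" for A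
    using gauss_emeasure[OF that] by (simp add: fA_def[abs_def])
  have e: "emeasure gaussian K * emeasure gaussian T \<le> emeasure gaussian ?S * emeasure gaussian (K \<inter> T)"
  proof -
    have m: "X \<in> sets gaussian" if "convex X" for X :: "(real ^ 'n) set"
      using convex_gauss(1)[OF that] by (simp add: gaussian_def)
    have mi: "emeasure gaussian X \<le> emeasure gaussian (interior X)" if "convex X" for X :: "(real ^ 'n) set"
    proof -
      have "emeasure gaussian X \<le> emeasure gaussian (closure X)"
        by (rule emeasure_mono[OF closure_subset]) (simp add: gaussian_def sets_completionI_sets)
      then show ?thesis using convex_gauss(2)[OF that] by simp
    qed
    have mc: "emeasure gaussian (closure X) \<le> emeasure gaussian X" if "convex X" for X :: "(real ^ 'n) set"
    proof -
      have "emeasure gaussian (interior X) \<le> emeasure gaussian X"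
        by (rule emeasure_mono[OF interior_subset m[OF that]])
      then show ?thesis using convex_gauss(2)[OF that] by simp
    qed
    have "emeasure gaussian K * emeasure gaussian T \<le> emeasure gaussian (interior K) * emeasure gaussian (interior T)"
      by (intro mult_mono mi assms) auto
    also have "\<dots> \<le> emeasure gaussian (closure ?S) * emeasure gaussian (closure (K \<inter> T))"
      using ad by (simp add: ge)
    also have "\<dots> \<le> emeasure gaussian ?S * emeasure gaussian (K \<inter> T)"
      by (intro mult_mono mc cS cI) auto
    finally show ?thesis .
  qed
  have fin: "emeasure gaussian ?S * emeasure gaussian (K \<inter> T) < top"
    using gauss_finite[of ?S] gauss_finite[of "K \<inter> T"] by (simp add: ennreal_mult_less_top)
  have "gamma K * gamma T = enn2real (emeasure gaussian K * emeasure gaussian T)"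
    by (simp add: gamma_def measure_def enn2real_mult)
  also have "\<dots> \<le> enn2real (emeasure gaussian ?S * emeasure gaussian (K \<inter> T))"
    by (rule enn2real_mono[OF e fin])
  also have "\<dots> = gamma ?S * gamma (K \<inter> T)"
    by (simp add: gamma_def measure_def enn2real_mult)
  finally show ?thesis .
qed

end
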